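(* Let $\mathbb{N}_2=(\{0,1,2\},\oplus,0)$ be the monoid with $0\oplus x=x\oplus 0=x$ for all $x$ and $1\oplus1=1\oplus2=2\oplus1=2\oplus2=2$. The hypergraph $P_3$ with vertex set $\{A,B,C,D\}$ and hyperedges $\{A,B\},\{B,C\},\{C,D\}$ does not have the local-to-global consistency property for $\mathbb{N}_2$-relations.
   Context: $\mathbb{N}_2$ is a positive commutative monoid (positive: $p\oplus q=0$ implies $p=q=0$). Attributes have domains; for a finite attribute set $X$, an $X$-tuple assigns each $A\in X$ a value in its domain; $t[Y]$ is restriction. A $\mathbb{K}$-relation over $X$ is a finitely supported function $R$ from $X$-tuples to the monoid's universe; marginals are $R[Y](t)=\sum_{r: R(r)\neq 0,\, r[Y]=t}R(r)$. A hypergraph with hyperedges $X_1,\dots,X_m$ (vertices as attributes) has the local-to-global consistency property for $\mathbb{K}$-relations if every collection $R_1(X_1),\dots,R_m(X_m)$ that is pairwise consistent (for all $i,j$ some $W$ over $X_i\cup X_j$ has $W[X_i]=R_i$, $W[X_j]=R_j$) is globally consistent (some $W$ over $X_1\cup\dots\cup X_m$ has $W[X_i]=R_i$ for all $i$). *)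

theory Defs
  imports Main
begin

datatype n2 = N0 | N1 | N2

instantiation n2 :: comm_monoid_add
begin
definition zero_n2 :: n2 where "zero_n2 = N0"
fun plus_n2 :: "n2 \<Rightarrow> n2 \<Rightarrow> n2" where
  "plus_n2 N0 y = y"
| "plus_n2 x N0 = x"
| "plus_n2 _ _ = N2"
instance
proof
  fix a b c :: n2
  show "a + b + c = a + (b + c)" by (cases a; cases b; cases c) auto
  show "a + b = b + a" by (cases a; cases b) auto
  show "0 + a = a" by (simp add: zero_n2_def)
qed
end

definition is_tuple :: "('a \<Rightarrow> 'v set) \<Rightarrow> 'a set \<Rightarrow> ('a \<rightharpoonup> 'v) \<Rightarrow> bool" where
  "is_tuple Dom X t \<longleftrightarrow> dom t = X \<and> (\<forall>x\<in>X. the (t x) \<in> Dom x)"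

definition is_krel :: "('a \<Rightarrow> 'v set) \<Rightarrow> 'a set \<Rightarrow> (('a \<rightharpoonup> 'v) \<Rightarrow> 'k::zero) \<Rightarrow> bool" where
  "is_krel Dom X R \<longleftrightarrow> finite {t. R t \<noteq> 0} \<and> (\<forall>t. R t \<noteq> 0 \<longrightarrow> is_tuple Dom X t)"

definition marg :: "(('a \<rightharpoonup> 'v) \<Rightarrow> 'k::comm_monoid_add) \<Rightarrow> 'a set \<Rightarrow> ('a \<rightharpoonup> 'v) \<Rightarrow> 'k" where
  "marg R Y = (\<lambda>t. \<Sum>r \<in> {r. R r \<noteq> 0 \<and> r |` Y = t}. R r)"

definition pairwise_consistent ::
  "('a \<Rightarrow> 'v set) \<Rightarrow> 'a set list \<Rightarrow> (nat \<Rightarrow> ('a \<rightharpoonup> 'v) \<Rightarrow> 'k::comm_monoid_add) \<Rightarrow> bool" where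
  "pairwise_consistent Dom Hs Rs \<longleftrightarrow>
     (\<forall>i<length Hs. \<forall>j<length Hs. \<exists>W. is_krel Dom (Hs!i \<union> Hs!j) W \<and>
        marg W (Hs!i) = Rs i \<and> marg W (Hs!j) = Rs j)"

definition globally_consistent ::
  "('a \<Rightarrow> 'v set) \<Rightarrow> 'a set list \<Rightarrow> (nat \<Rightarrow> ('a \<rightharpoonup> 'v) \<Rightarrow> 'k::comm_monoid_add) \<Rightarrow> bool" where
  "globally_consistent Dom Hs Rs \<longleftrightarrow>
     (\<exists>W. is_krel Dom (\<Union>(set Hs)) W \<and> (\<forall>i<length Hs. marg W (Hs!i) = Rs i))"

definition local_to_global ::
  "'k::comm_monoid_add itself \<Rightarrow> ('a \<Rightarrow> 'v set) \<Rightarrow> 'a set list \<Rightarrow> bool" where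
  "local_to_global K Dom Hs \<longleftrightarrow>
     (\<forall>Rs :: nat \<Rightarrow> ('a \<rightharpoonup> 'v) \<Rightarrow> 'k.
        (\<forall>i<length Hs. is_krel Dom (Hs!i) (Rs i)) \<longrightarrow>
        pairwise_consistent Dom Hs Rs \<longrightarrow> globally_consistent Dom Hs Rs)"

datatype att = A | B | C | D

definition P3 :: "att set list" where
  "P3 = [{A, B}, {B, C}, {C, D}]"

end

theory Submission
  imports Defs
begin

definition tup :: "nat option \<Rightarrow> nat option \<Rightarrow> nat option \<Rightarrow> nat option \<Rightarrow> att \<rightharpoonup> nat" where
  "tup a b c d = (\<lambda>x. case x of A \<Rightarrow> a | B \<Rightarrow> b | C \<Rightarrow> c | D \<Rightarrow> d)"

lemma tup_eq[simp]: "tup a b c d = tup a' b' c' d' \<longleftrightarrow> a = a' \<and> b = b' \<and> c = c' \<and> d = d'"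
  unfolding tup_def fun_eq_iff by (metis att.simps(13) att.simps(14) att.simps(15) att.simps(16))

lemma tup_eta: "r = tup (r A) (r B) (r C) (r D)"
  unfolding tup_def fun_eq_iff by (auto split: att.split)

lemma tup_app[simp]: "tup a b c d A = a" "tup a b c d B = b" "tup a b c d C = c" "tup a b c d D = d"
  by (simp_all add: tup_def)

lemma tup_restrict[simp]: "tup a b c d |` Y = tup (if A \<in> Y then a else None) (if B \<in> Y then b else None)
   (if C \<in> Y then c else None) (if D \<in> Y then d else None)"
  unfolding tup_def restrict_map_def fun_eq_iff by (auto split: att.split)

lemma dom_tup[simp]: "dom (tup a b c d) = (if a = None then {} else {A}) \<union> (if b = None then {} else {B})
   \<union> (if c = None then {} else {C}) \<union> (if d = None then {} else {D})"
  apply (rule set_eqI)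
  subgoal for x by (cases x) (auto simp: tup_def)
  done

fun lk :: "((att \<rightharpoonup> nat) \<times> n2) list \<Rightarrow> (att \<rightharpoonup> nat) \<Rightarrow> n2" where
  "lk [] r = 0"
| "lk ((k,v)#L) r = (if r = k then v else lk L r)"

lemma lk_nz: "\<forall>p\<in>set L. snd p \<noteq> 0 \<Longrightarrow> lk L r \<noteq> 0 \<longleftrightarrow> r \<in> fst ` set L"
  by (induction L) (auto split: if_splits)

lemma lk_supp: "\<forall>p\<in>set L. snd p \<noteq> 0 \<Longrightarrow> {r. lk L r \<noteq> 0 \<and> P r} = {r \<in> fst ` set L. P r}"
  using lk_nz by blast

lemma sum_lk: "distinct (map fst L) \<Longrightarrow> sum (lk L) {r \<in> set (map fst L). P r} = sum_list (map snd (filter (\<lambda>p. P (fst p)) L))"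
proof (induction L)
  case Nil
  then show ?case by simp
next
  case (Cons p L)
  obtain k v where p: "p = (k,v)" by fastforce
  have kn: "k \<notin> set (map fst L)" using Cons.prems p by simp
  have eq: "sum (lk (p#L)) {r \<in> set (map fst L). P r} = sum (lk L) {r \<in> set (map fst L). P r}"
    by (rule sum.cong) (use kn p in auto)
  show ?case
  proof (cases "P k")
    case True
    have "{r \<in> set (map fst (p#L)). P r} = insert k {r \<in> set (map fst L). P r}" using p True by auto
    then show ?thesis using kn p True eq Cons by simp
  next
    case False
    have "{r \<in> set (map fst (p#L)). P r} = {r \<in> set (map fst L). P r}" using p False by auto
    then show ?thesis using kn p False eq Cons by simp
  qed
qed

lemma marg_lk: "\<forall>p\<in>set L. snd p \<noteq> 0 \<Longrightarrow> distinct (map fst L) \<Longrightarrow>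
   marg (lk L) Y t = sum_list (map snd (filter (\<lambda>p. fst p |` Y = t) L))"
  unfolding marg_def lk_supp using sum_lk[of L] by simp

abbreviation "a0 \<equiv> Some (0::nat)"
abbreviation "a1 \<equiv> Some (1::nat)"

definition "R1 = lk [(tup a0 a0 None None, N1), (tup a1 a0 None None, N1), (tup a0 a1 None None, N2)]"
definition "R2 = lk [(tup None a0 a0 None, N2), (tup None a1 a1 None, N2)]"
definition "R3 = lk [(tup None None a0 a0, N1), (tup None None a0 a1, N2), (tup None None a1 a0, N2)]"
definition "W12 = lk [(tup a0 a0 a0 None, N1), (tup a1 a0 a0 None, N1), (tup a0 a1 a1 None, N2)]"
definition "W23 = lk [(tup None a0 a0 a0, N1), (tup None a0 a0 a1, N2), (tup None a1 a1 a0, N2)]"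
definition "W13 = lk [(tup a0 a0 a0 a0, N1), (tup a1 a0 a0 a1, N1), (tup a0 a1 a0 a1, N1), (tup a0 a1 a1 a0, N2)]"

lemma tup_ext: "(\<And>a b c d. f (tup a b c d) = g (tup a b c d)) \<Longrightarrow> f = g"
  by (rule ext) (metis tup_eta)

lemma mg1: "marg R1 {A,B} = R1" by (rule tup_ext, simp only: R1_def, subst marg_lk, simp add: zero_n2_def, simp, auto simp: zero_n2_def)
lemma mg2: "marg R2 {B,C} = R2" by (rule tup_ext, simp only: R2_def, subst marg_lk, simp add: zero_n2_def, simp, auto simp: zero_n2_def)
lemma mg3: "marg R3 {C,D} = R3" by (rule tup_ext, simp only: R3_def, subst marg_lk, simp add: zero_n2_def, simp, auto simp: zero_n2_def)
lemma mg12a: "marg W12 {A,B} = R1" by (rule tup_ext, simp only: W12_def R1_def, subst marg_lk, simp add: zero_n2_def, simp, auto simp: zero_n2_def)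
lemma mg12b: "marg W12 {B,C} = R2" by (rule tup_ext, simp only: W12_def R2_def, subst marg_lk, simp add: zero_n2_def, simp, auto simp: zero_n2_def)
lemma mg23a: "marg W23 {B,C} = R2" by (rule tup_ext, simp only: W23_def R2_def, subst marg_lk, simp add: zero_n2_def, simp, auto simp: zero_n2_def)
lemma mg23b: "marg W23 {C,D} = R3" by (rule tup_ext, simp only: W23_def R3_def, subst marg_lk, simp add: zero_n2_def, simp, auto simp: zero_n2_def)
lemma mg13a: "marg W13 {A,B} = R1" by (rule tup_ext, simp only: W13_def R1_def, subst marg_lk, simp add: zero_n2_def, simp, auto simp: zero_n2_def)
lemma mg13b: "marg W13 {C,D} = R3" by (rule tup_ext, simp only: W13_def R3_def, subst marg_lk, simp add: zero_n2_def, simp, auto simp: zero_n2_def)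

lemma krel_lk: "\<forall>p\<in>set L. snd p \<noteq> 0 \<Longrightarrow> \<forall>p\<in>set L. dom (fst p) = X \<Longrightarrow> is_krel (\<lambda>_. UNIV) X (lk L)"
  unfolding is_krel_def is_tuple_def using lk_nz[of L] by (auto simp: lk_supp)

lemma k1: "is_krel (\<lambda>_. UNIV) {A,B} R1" by (simp only: R1_def, rule krel_lk, simp add: zero_n2_def, auto)
lemma k2: "is_krel (\<lambda>_. UNIV) {B,C} R2" by (simp only: R2_def, rule krel_lk, simp add: zero_n2_def, auto)
lemma k3: "is_krel (\<lambda>_. UNIV) {C,D} R3" by (simp only: R3_def, rule krel_lk, simp add: zero_n2_def, auto)
lemma k12: "is_krel (\<lambda>_. UNIV) {A,B,C} W12" by (simp only: W12_def, rule krel_lk, simp add: zero_n2_def, auto)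
lemma k23: "is_krel (\<lambda>_. UNIV) {B,C,D} W23" by (simp only: W23_def, rule krel_lk, simp add: zero_n2_def, auto)
lemma k13: "is_krel (\<lambda>_. UNIV) {A,B,C,D} W13" by (simp only: W13_def, rule krel_lk, simp add: zero_n2_def, auto)



lemma n2_two: "(x::n2) \<noteq> 0 \<Longrightarrow> y \<noteq> 0 \<Longrightarrow> x + y = N2"
  by (cases x; cases y) (auto simp: zero_n2_def)

lemma n2_nz: "(x::n2) \<noteq> 0 \<Longrightarrow> x + y \<noteq> 0"
  by (cases x; cases y) (auto simp: zero_n2_def)

lemma sum_nz: "finite F \<Longrightarrow> x \<in> F \<Longrightarrow> \<forall>y\<in>F. g y \<noteq> (0::n2) \<Longrightarrow> sum g F \<noteq> 0"
  by (simp add: sum.remove n2_nz)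

lemma sum_two: "finite F \<Longrightarrow> x \<in> F \<Longrightarrow> y \<in> F \<Longrightarrow> x \<noteq> y \<Longrightarrow> \<forall>z\<in>F. g z \<noteq> (0::n2) \<Longrightarrow> sum g F = N2"
proof -
  assume a: "finite F" "x \<in> F" "y \<in> F" "x \<noteq> y" "\<forall>z\<in>F. g z \<noteq> (0::n2)"
  have "sum g (F - {x}) \<noteq> 0" using a by (intro sum_nz[of _ y]) auto
  then show ?thesis using a by (simp add: sum.remove n2_two)
qed

lemma sum_N1: "finite F \<Longrightarrow> \<forall>z\<in>F. g z \<noteq> (0::n2) \<Longrightarrow> sum g F = N1 \<Longrightarrow> \<exists>x. F = {x} \<and> g x = N1"
proof -
  assume a: "finite F" "\<forall>z\<in>F. g z \<noteq> (0::n2)" "sum g F = N1"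
  have "F \<noteq> {}" using a by (auto simp: zero_n2_def)
  then obtain x where x: "x \<in> F" by blast
  have "F = {x}"
  proof (rule ccontr)
    assume "F \<noteq> {x}"
    then obtain y where "y \<in> F" "y \<noteq> x" using x by blast
    then have "sum g F = N2" using a x by (intro sum_two[of _ x y]) auto
    then show False using a by simp
  qed
  then show ?thesis using a by auto
qed

lemma rAB: "s |` {A,B} = tup (s A) (s B) None None" by (subst tup_eta[of s]) simp
lemma rBC: "s |` {B,C} = tup None (s B) (s C) None" by (subst tup_eta[of s]) simp
lemma rCD: "s |` {C,D} = tup None None (s C) (s D)" by (subst tup_eta[of s]) simp

lemma R1_nz: "R1 (tup a b None None) \<noteq> 0 \<Longrightarrow> (a = a0 \<and> b = a0) \<or> (a = a1 \<and> b = a0) \<or> (a = a0 \<and> b = a1)"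
  by (auto simp: R1_def zero_n2_def split: if_splits)
lemma R2_nz: "R2 (tup None b c None) \<noteq> 0 \<Longrightarrow> (b = a0 \<and> c = a0) \<or> (b = a1 \<and> c = a1)"
  by (auto simp: R2_def zero_n2_def split: if_splits)

lemma no_global:
  assumes k: "is_krel Dom X W" and m1: "marg W {A,B} = R1" and m2: "marg W {B,C} = R2"
    and m3: "marg W {C,D} = R3"
  shows False
proof -
  have fin: "finite {t. W t \<noteq> 0}" using k by (simp add: is_krel_def)
  have finP: "finite {r. W r \<noteq> 0 \<and> P r}" for P by (rule finite_subset[OF _ fin]) auto
  have mAB: "sum W {r. W r \<noteq> 0 \<and> r A = a \<and> r B = b} = R1 (tup a b None None)" for a b
  proof -
    have "R1 (tup a b None None) = marg W {A,B} (tup a b None None)" using m1 by simp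
    also have "\<dots> = sum W {r. W r \<noteq> 0 \<and> r A = a \<and> r B = b}" unfolding marg_def rAB by simp
    finally show ?thesis by simp
  qed
  have mBC: "sum W {r. W r \<noteq> 0 \<and> r B = b \<and> r C = c} = R2 (tup None b c None)" for b c
  proof -
    have "R2 (tup None b c None) = marg W {B,C} (tup None b c None)" using m2 by simp
    also have "\<dots> = sum W {r. W r \<noteq> 0 \<and> r B = b \<and> r C = c}" unfolding marg_def rBC by simp
    finally show ?thesis by simp
  qed
  have mCD: "sum W {r. W r \<noteq> 0 \<and> r C = c \<and> r D = d} = R3 (tup None None c d)" for c d
  proof -
    have "R3 (tup None None c d) = marg W {C,D} (tup None None c d)" using m3 by simp
    also have "\<dots> = sum W {r. W r \<noteq> 0 \<and> r C = c \<and> r D = d}" unfolding marg_def rCD by simp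
    finally show ?thesis by simp
  qed
  have sAB: "R1 (tup (r A) (r B) None None) \<noteq> 0" if "W r \<noteq> 0" for r
    unfolding mAB[symmetric] by (rule sum_nz[of _ r]) (use that finP in auto)
  have sBC: "R2 (tup None (r B) (r C) None) \<noteq> 0" if "W r \<noteq> 0" for r
    unfolding mBC[symmetric] by (rule sum_nz[of _ r]) (use that finP in auto)
  have "sum W {r. W r \<noteq> 0 \<and> r A = a0 \<and> r B = a0} = N1" unfolding mAB by (simp add: R1_def)
  then have "\<exists>x. {r. W r \<noteq> 0 \<and> r A = a0 \<and> r B = a0} = {x} \<and> W x = N1"
    by (intro sum_N1[OF finP]) auto
  then obtain x1 where x1: "{r. W r \<noteq> 0 \<and> r A = a0 \<and> r B = a0} = {x1}" "W x1 = N1"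
    by blast
  have "sum W {r. W r \<noteq> 0 \<and> r A = a1 \<and> r B = a0} = N1" unfolding mAB by (simp add: R1_def)
  then have "\<exists>x. {r. W r \<noteq> 0 \<and> r A = a1 \<and> r B = a0} = {x} \<and> W x = N1"
    by (intro sum_N1[OF finP]) auto
  then obtain x2 where x2: "{r. W r \<noteq> 0 \<and> r A = a1 \<and> r B = a0} = {x2}" "W x2 = N1"
    by blast
  have "sum W {r. W r \<noteq> 0 \<and> r C = a0 \<and> r D = a0} = N1" unfolding mCD by (simp add: R3_def)
  then have "\<exists>x. {r. W r \<noteq> 0 \<and> r C = a0 \<and> r D = a0} = {x} \<and> W x = N1"
    by (intro sum_N1[OF finP]) auto
  then obtain y1 where y1: "{r. W r \<noteq> 0 \<and> r C = a0 \<and> r D = a0} = {y1}" "W y1 = N1"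
    by blast
  have T2: "sum W {r. W r \<noteq> 0 \<and> r C = a0 \<and> r D = a1} = N2" unfolding mCD by (simp add: R3_def)
  have key: "s = x1 \<or> s = x2" if "W s \<noteq> 0" "s C = a0" for s
  proof -
    have "s B = a0" using R2_nz[OF sBC[OF that(1)]] that(2) by auto
    then have "s A = a0 \<or> s A = a1" using R1_nz[OF sAB[OF that(1)]] by auto
    then show ?thesis
    proof
      assume "s A = a0"
      then have "s \<in> {r. W r \<noteq> 0 \<and> r A = a0 \<and> r B = a0}" using that \<open>s B = a0\<close> by simp
      then show ?thesis using x1(1) by blast
    next
      assume "s A = a1"
      then have "s \<in> {r. W r \<noteq> 0 \<and> r A = a1 \<and> r B = a0}" using that \<open>s B = a0\<close> by simp
      then show ?thesis using x2(1) by blast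
    qed
  qed
  have "y1 \<in> {r. W r \<noteq> 0 \<and> r C = a0 \<and> r D = a0}" using y1(1) by blast
  then have y1p: "W y1 \<noteq> 0" "y1 C = a0" "y1 D = a0" by simp_all
  obtain z where z: "W z = N1" "{r. W r \<noteq> 0 \<and> r C = a0 \<and> r D = a1} \<subseteq> {z}"
  proof (cases "y1 = x1")
    case True
    have "{r. W r \<noteq> 0 \<and> r C = a0 \<and> r D = a1} \<subseteq> {x2}"
    proof
      fix s assume "s \<in> {r. W r \<noteq> 0 \<and> r C = a0 \<and> r D = a1}"
      then have s: "W s \<noteq> 0" "s C = a0" "s D = a1" by auto
      then have "s \<noteq> y1" using y1p by auto
      then show "s \<in> {x2}" using key[OF s(1,2)] True by auto
    qed
    then show ?thesis using that x2 by blast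
  next
    case False
    then have "y1 = x2" using key[OF y1p(1,2)] by blast
    have "{r. W r \<noteq> 0 \<and> r C = a0 \<and> r D = a1} \<subseteq> {x1}"
    proof
      fix s assume "s \<in> {r. W r \<noteq> 0 \<and> r C = a0 \<and> r D = a1}"
      then have s: "W s \<noteq> 0" "s C = a0" "s D = a1" by auto
      then have "s \<noteq> y1" using y1p by auto
      then show "s \<in> {x1}" using key[OF s(1,2)] \<open>y1 = x2\<close> by auto
    qed
    then show ?thesis using that x1 by blast
  qed
  then consider "{r. W r \<noteq> 0 \<and> r C = a0 \<and> r D = a1} = {}" | "{r. W r \<noteq> 0 \<and> r C = a0 \<and> r D = a1} = {z}"
    using subset_singletonD[OF z(2)] by blast
  then show False
  proof cases
    case 1
    from T2[unfolded 1] show False by (simp add: zero_n2_def)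
  next
    case 2
    from T2[unfolded 2] z(1) show False by simp
  qed
qed



theorem proposition10:
  shows "\<not> (\<forall>Dom :: att \<Rightarrow> nat set. local_to_global TYPE(n2) Dom P3)"
proof
  assume "\<forall>Dom :: att \<Rightarrow> nat set. local_to_global TYPE(n2) Dom P3"
  then have L: "local_to_global TYPE(n2) (\<lambda>_. UNIV :: nat set) P3" by blast
  define Rs where "Rs = (\<lambda>i::nat. if i = 0 then R1 else if i = 1 then R2 else R3)"
  have i3: "i < length P3 \<longleftrightarrow> i = 0 \<or> i = 1 \<or> i = 2" for i by (auto simp: P3_def)
  have kr: "\<forall>i<length P3. is_krel (\<lambda>_. UNIV) (P3!i) (Rs i)"
    unfolding i3 by (auto simp: P3_def Rs_def k1 k2 k3)
  have c00: "\<exists>W. is_krel (\<lambda>_. UNIV) (P3!0 \<union> P3!0) W \<and> marg W (P3!0) = Rs 0 \<and> marg W (P3!0) = Rs 0"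
  proof -
    have eq: "P3!0 \<union> P3!0 = {A,B}" by (auto simp: P3_def)
    show ?thesis by (rule exI[of _ R1], simp only: eq, simp add: P3_def Rs_def k1 mg1 mg1)
  qed
  have c01: "\<exists>W. is_krel (\<lambda>_. UNIV) (P3!0 \<union> P3!1) W \<and> marg W (P3!0) = Rs 0 \<and> marg W (P3!1) = Rs 1"
  proof -
    have eq: "P3!0 \<union> P3!1 = {A,B,C}" by (auto simp: P3_def)
    show ?thesis by (rule exI[of _ W12], simp only: eq, simp add: P3_def Rs_def k12 mg12a mg12b)
  qed
  have c02: "\<exists>W. is_krel (\<lambda>_. UNIV) (P3!0 \<union> P3!2) W \<and> marg W (P3!0) = Rs 0 \<and> marg W (P3!2) = Rs 2"
  proof -
    have eq: "P3!0 \<union> P3!2 = {A,B,C,D}" by (auto simp: P3_def)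
    show ?thesis by (rule exI[of _ W13], simp only: eq, simp add: P3_def Rs_def k13 mg13a mg13b)
  qed
  have c10: "\<exists>W. is_krel (\<lambda>_. UNIV) (P3!1 \<union> P3!0) W \<and> marg W (P3!1) = Rs 1 \<and> marg W (P3!0) = Rs 0"
  proof -
    have eq: "P3!1 \<union> P3!0 = {A,B,C}" by (auto simp: P3_def)
    show ?thesis by (rule exI[of _ W12], simp only: eq, simp add: P3_def Rs_def k12 mg12a mg12b)
  qed
  have c11: "\<exists>W. is_krel (\<lambda>_. UNIV) (P3!1 \<union> P3!1) W \<and> marg W (P3!1) = Rs 1 \<and> marg W (P3!1) = Rs 1"
  proof -
    have eq: "P3!1 \<union> P3!1 = {B,C}" by (auto simp: P3_def)
    show ?thesis by (rule exI[of _ R2], simp only: eq, simp add: P3_def Rs_def k2 mg2)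
  qed
  have c12: "\<exists>W. is_krel (\<lambda>_. UNIV) (P3!1 \<union> P3!2) W \<and> marg W (P3!1) = Rs 1 \<and> marg W (P3!2) = Rs 2"
  proof -
    have eq: "P3!1 \<union> P3!2 = {B,C,D}" by (auto simp: P3_def)
    show ?thesis by (rule exI[of _ W23], simp only: eq, simp add: P3_def Rs_def k23 mg23a mg23b)
  qed
  have c20: "\<exists>W. is_krel (\<lambda>_. UNIV) (P3!2 \<union> P3!0) W \<and> marg W (P3!2) = Rs 2 \<and> marg W (P3!0) = Rs 0"
  proof -
    have eq: "P3!2 \<union> P3!0 = {A,B,C,D}" by (auto simp: P3_def)
    show ?thesis by (rule exI[of _ W13], simp only: eq, simp add: P3_def Rs_def k13 mg13a mg13b)
  qed
  have c21: "\<exists>W. is_krel (\<lambda>_. UNIV) (P3!2 \<union> P3!1) W \<and> marg W (P3!2) = Rs 2 \<and> marg W (P3!1) = Rs 1"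
  proof -
    have eq: "P3!2 \<union> P3!1 = {B,C,D}" by (auto simp: P3_def)
    show ?thesis by (rule exI[of _ W23], simp only: eq, simp add: P3_def Rs_def k23 mg23a mg23b)
  qed
  have c22: "\<exists>W. is_krel (\<lambda>_. UNIV) (P3!2 \<union> P3!2) W \<and> marg W (P3!2) = Rs 2 \<and> marg W (P3!2) = Rs 2"
  proof -
    have eq: "P3!2 \<union> P3!2 = {C,D}" by (auto simp: P3_def)
    show ?thesis by (rule exI[of _ R3], simp only: eq, simp add: P3_def Rs_def k3 mg3)
  qed
  have pw: "pairwise_consistent (\<lambda>_. UNIV) P3 Rs"
    unfolding pairwise_consistent_def i3
    apply (intro allI impI)
    subgoal for i j using c00 c01 c02 c10 c11 c12 c20 c21 c22 by (elim disjE; simp)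
    done
  have "globally_consistent (\<lambda>_. UNIV) P3 Rs"
    using mp[OF mp[OF spec[OF L[unfolded local_to_global_def], of Rs] kr] pw] .
  then obtain W where W: "is_krel (\<lambda>_. UNIV) (\<Union>(set P3)) W" "\<forall>i<length P3. marg W (P3!i) = Rs i"
    unfolding globally_consistent_def by blast
  have l3: "length P3 = 3" by (simp add: P3_def)
  have "marg W (P3!0) = Rs 0" "marg W (P3!1) = Rs 1" "marg W (P3!2) = Rs 2"
    using W(2)[rule_format, of 0] W(2)[rule_format, of 1] W(2)[rule_format, of 2] l3 by auto
  then have "marg W {A,B} = R1" "marg W {B,C} = R2" "marg W {C,D} = R3"
    by (simp_all add: P3_def Rs_def)
  then show False by (rule no_global[OF W(1)])
qed

end
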